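(* Let $(\Omega,\mathcal{F},\mathbb{P})$ be a nonatomic probability space and let $(\mathcal{X},\mathcal{X}^\ast)$ be a pair of law-invariant vector subspaces of $L^1$, each containing $L^\infty$, such that $XY\in L^1$ for all $X\in\mathcal{X}$ and $Y\in\mathcal{X}^\ast$. Let $\mathcal{M}$ be a law-invariant linear subspace of $\mathcal{X}$ containing a nonconstant random variable, let $Y\in\mathcal{X}^\ast$, and define the linear functional $\varphi:\mathcal{M}\to\mathbb{R}$ by $\varphi(X)=\mathbb{E}_{\mathbb{P}}[XY]$. Then $\varphi$ is law invariant (i.e. $\varphi(X_1)=\varphi(X_2)$ whenever $X_1,X_2\in\mathcal{M}$ have the same law under $\mathbb{P}$) if and only if $Y$ is (a.s.) constant.
   Context: $L^0$ denotes real random variables modulo a.s. equality; "nonconstant" means not a.s. constant. A set $\mathcal{S}\subset L^0$ is law invariant if $X\in\mathcal{S}$ whenever $X\in L^0$ has the same law under $\mathbb{P}$ as some element of $\mathcal{S}$. *)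

theory Defs
  imports "HOL-Probability.Probability"
begin

text \<open>Law invariance
(which in particular forces closure under a.s. equality) is expressed via
equality of distributions.\<close>

definition nonatomic :: "'a measure \<Rightarrow> bool" where
  "nonatomic M \<longleftrightarrow> (\<forall>A\<in>sets M. measure M A > 0 \<longrightarrow>
      (\<exists>B\<in>sets M. B \<subseteq> A \<and> 0 < measure M B \<and> measure M B < measure M A))"

definition same_law :: "'a measure \<Rightarrow> ('a \<Rightarrow> real) \<Rightarrow> ('a \<Rightarrow> real) \<Rightarrow> bool" where
  "same_law M X Y \<longleftrightarrow> X \<in> borel_measurable M \<and> Y \<in> borel_measurable M \<and>
      distr M borel X = distr M borel Y"

definition law_invariant_set :: "'a measure \<Rightarrow> ('a \<Rightarrow> real) set \<Rightarrow> bool" where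
  "law_invariant_set M S \<longleftrightarrow>
     (\<forall>X Y. X \<in> borel_measurable M \<longrightarrow> Y \<in> S \<longrightarrow> same_law M X Y \<longrightarrow> X \<in> S)"

definition rv_subspace :: "'a measure \<Rightarrow> ('a \<Rightarrow> real) set \<Rightarrow> bool" where
  "rv_subspace M S \<longleftrightarrow> S \<subseteq> borel_measurable M \<and> (\<lambda>_. 0) \<in> S \<and>
     (\<forall>X\<in>S. \<forall>Y\<in>S. (\<lambda>\<omega>. X \<omega> + Y \<omega>) \<in> S) \<and>
     (\<forall>c::real. \<forall>X\<in>S. (\<lambda>\<omega>. c * X \<omega>) \<in> S)"

definition Linfty :: "'a measure \<Rightarrow> ('a \<Rightarrow> real) set" where
  "Linfty M = {X \<in> borel_measurable M. \<exists>C. AE \<omega> in M. \<bar>X \<omega>\<bar> \<le> C}"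

definition L1 :: "'a measure \<Rightarrow> ('a \<Rightarrow> real) set" where
  "L1 M = {X. integrable M X}"

definition as_constant :: "'a measure \<Rightarrow> ('a \<Rightarrow> real) \<Rightarrow> bool" where
  "as_constant M X \<longleftrightarrow> (\<exists>c. AE \<omega> in M. X \<omega> = c)"

definition law_invariant_functional ::
  "'a measure \<Rightarrow> ('a \<Rightarrow> real) set \<Rightarrow> (('a \<Rightarrow> real) \<Rightarrow> real) \<Rightarrow> bool" where
  "law_invariant_functional M S \<phi> \<longleftrightarrow>
     (\<forall>X1\<in>S. \<forall>X2\<in>S. same_law M X1 X2 \<longrightarrow> \<phi> X1 = \<phi> X2)"

end

theory Submission
  imports Defs
begin


context prob_space
begin

lemma halve_set:
  assumes na: "nonatomic M" and A: "A \<in> sets M" "prob A > 0"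
  shows "\<exists>B\<in>sets M. B \<subseteq> A \<and> 0 < prob B \<and> prob B \<le> prob A / 2"
proof -
  obtain B where B: "B \<in> sets M" "B \<subseteq> A" "0 < prob B" "prob B < prob A"
    using na A unfolding nonatomic_def by blast
  show ?thesis
  proof (cases "prob B \<le> prob A / 2")
    case True then show ?thesis using B by blast
  next
    case False
    have "prob (A - B) = prob A - prob B" using finite_measure_Diff B A by blast
    then show ?thesis using B A False
      by (intro bexI[of _ "A - B"]) auto
  qed
qed

lemma small_subset:
  assumes na: "nonatomic M" and A: "A \<in> sets M" "prob A > 0"
  shows "\<exists>B\<in>sets M. B \<subseteq> A \<and> 0 < prob B \<and> prob B \<le> prob A * (1/2)^n"
proof (induction n)
  case 0 then show ?case using A by auto
next
  case (Suc n)
  then obtain B where B: "B \<in> sets M" "B \<subseteq> A" "0 < prob B" "prob B \<le> prob A * (1/2)^n" by blast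
  then obtain C where C: "C \<in> sets M" "C \<subseteq> B" "0 < prob C" "prob C \<le> prob B / 2"
    using halve_set[OF na] by blast
  then show ?case using B by (intro bexI[of _ C]) auto
qed

lemma small_subset_eps:
  assumes na: "nonatomic M" and A: "A \<in> sets M" "prob A > 0" and e: "e > 0"
  shows "\<exists>B\<in>sets M. B \<subseteq> A \<and> 0 < prob B \<and> prob B < e"
proof -
  obtain n where n: "(1/2::real)^n < e" using real_arch_pow_inv[OF e, of "1/2"] by auto
  obtain B where B: "B \<in> sets M" "B \<subseteq> A" "0 < prob B" "prob B \<le> prob A * (1/2)^n"
    using small_subset[OF na A] by blast
  have "prob A * (1/2)^n \<le> 1 * (1/2)^n" by (intro mult_right_mono) auto
  then have "prob B < e" using B n by linarith
  then show ?thesis using B by blast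
qed

lemma sierpinski:
  assumes na: "nonatomic M" and A: "A \<in> sets M" and s: "0 \<le> s" "s \<le> prob A"
  shows "\<exists>B\<in>sets M. B \<subseteq> A \<and> prob B = s"
proof -
  define T where "T B = {C \<in> sets M. C \<subseteq> A - B \<and> prob C \<le> s - prob B}" for B
  define \<sigma> where "\<sigma> B = Sup (prob ` T B)" for B
  define step where "step B = B \<union> (SOME C. C \<in> T B \<and> \<sigma> B \<le> 2 * prob C)" for B
  define Bs where "Bs n = (step ^^ n) {}" for n
  have ex: "\<exists>C. C \<in> T B \<and> \<sigma> B \<le> 2 * prob C" if "prob B \<le> s" for B
  proof -
    have e: "{} \<in> T B" using that by (auto simp: T_def)
    have bdd: "bdd_above (prob ` T B)" by (auto intro!: bdd_aboveI[of _ 1])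
    show ?thesis
    proof (cases "\<sigma> B \<le> 0")
      case True then show ?thesis using e by auto
    next
      case False
      then have "\<sigma> B / 2 < Sup (prob ` T B)" by (simp add: \<sigma>_def)
      then obtain C where "C \<in> T B" "\<sigma> B / 2 < prob C"
        using less_cSup_iff[of "prob ` T B" "\<sigma> B / 2"] e bdd by blast
      then show ?thesis by (intro exI[of _ C]) auto
    qed
  qed
  have inv: "Bs n \<in> sets M \<and> Bs n \<subseteq> A \<and> prob (Bs n) \<le> s" for n
  proof (induction n)
    case 0 then show ?case using s by (auto simp: Bs_def)
  next
    case (Suc n)
    define C where "C = (SOME C. C \<in> T (Bs n) \<and> \<sigma> (Bs n) \<le> 2 * prob C)"
    have C: "C \<in> T (Bs n)" "\<sigma> (Bs n) \<le> 2 * prob C"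
      using someI_ex[OF ex[of "Bs n"]] Suc unfolding C_def by auto
    have eq: "Bs (Suc n) = Bs n \<union> C" by (simp add: Bs_def step_def C_def)
    have "prob (Bs n \<union> C) = prob (Bs n) + prob C"
      using C Suc by (intro finite_measure_Union) (auto simp: T_def)
    then show ?case using C Suc eq by (auto simp: T_def)
  qed
  have incr: "Bs n \<subseteq> Bs (Suc n)" for n by (simp add: Bs_def step_def)
  have inc: "incseq Bs" using incr by (simp add: incseq_SucI)
  define B where "B = (\<Union>n. Bs n)"
  have Bs_sets: "range Bs \<subseteq> sets M" using inv by auto
  have Bsets: "B \<in> sets M" using Bs_sets unfolding B_def by auto
  have BA: "B \<subseteq> A" using inv unfolding B_def by auto
  have lim: "(\<lambda>n. prob (Bs n)) \<longlonglongrightarrow> prob B"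
    unfolding B_def by (rule finite_Lim_measure_incseq[OF Bs_sets inc])
  have Ble: "prob B \<le> s"
    using inv by (intro LIMSEQ_le_const2[OF lim]) auto
  have "prob B = s"
  proof (rule ccontr)
    assume "prob B \<noteq> s"
    then have lt: "prob B < s" using Ble by auto
    have "prob (A - B) = prob A - prob B" using finite_measure_Diff[OF A Bsets BA] .
    then have pos: "prob (A - B) > 0" using lt s by auto
    obtain C where C: "C \<in> sets M" "C \<subseteq> A - B" "0 < prob C" "prob C < s - prob B"
      using small_subset_eps[OF na _ pos, of "s - prob B"] lt A Bsets by auto
    have grow: "prob (Bs (Suc n)) \<ge> prob (Bs n) + prob C / 2" for n
    proof -
      define D where "D = (SOME C. C \<in> T (Bs n) \<and> \<sigma> (Bs n) \<le> 2 * prob C)"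
      have D: "D \<in> T (Bs n)" "\<sigma> (Bs n) \<le> 2 * prob D"
        using someI_ex[OF ex[of "Bs n"]] inv unfolding D_def by auto
      have eq: "Bs (Suc n) = Bs n \<union> D" by (simp add: Bs_def step_def D_def)
      have "prob (Bs n \<union> D) = prob (Bs n) + prob D"
        using D inv by (intro finite_measure_Union) (auto simp: T_def)
      have "prob (Bs n) \<le> prob B" using Bsets
        by (intro finite_measure_mono) (auto simp: B_def)
      then have "C \<in> T (Bs n)" using C B_def by (auto simp: T_def)
      then have "prob C \<le> \<sigma> (Bs n)" unfolding \<sigma>_def
        by (intro cSup_upper) (auto intro!: bdd_aboveI[of _ 1])
      then show ?thesis using D eq \<open>prob (Bs n \<union> D) = _\<close> by auto
    qed
    have big: "prob (Bs n) \<ge> real n * (prob C / 2)" for n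
    proof (induction n)
      case (Suc n) then show ?case using grow[of n] by (simp add: algebra_simps)
    qed auto
    obtain n where n: "real n > 2 / prob C" using reals_Archimedean2 by blast
    have "real n * (prob C / 2) > 1" using n C(3) by (simp add: field_simps)
    then show False using big[of n] prob_le_1[of "Bs n"] by linarith
  qed
  then show ?thesis using Bsets BA by blast
qed

lemma sierpinski_between:
  assumes na: "nonatomic M" and A: "A \<in> sets M" "C \<in> sets M" "A \<subseteq> C"
    and s: "prob A \<le> s" "s \<le> prob C"
  shows "\<exists>B\<in>sets M. A \<subseteq> B \<and> B \<subseteq> C \<and> prob B = s"
proof -
  have "prob (C - A) = prob C - prob A" using finite_measure_Diff A by blast
  then obtain B' where B': "B' \<in> sets M" "B' \<subseteq> C - A" "prob B' = s - prob A"
    using sierpinski[OF na, of "C - A" "s - prob A"] A s by auto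
  have "prob (A \<union> B') = prob A + prob B'" using B' A by (intro finite_measure_Union) auto
  then show ?thesis using B' A by (intro bexI[of _ "A \<union> B'"]) auto
qed

end


definition midset :: "'a measure \<Rightarrow> 'a set \<Rightarrow> 'a set \<Rightarrow> 'a set" where
  "midset M A C = (SOME B. B \<in> sets M \<and> A \<subseteq> B \<and> B \<subseteq> C \<and>
      measure M B = (measure M A + measure M C) / 2)"

primrec dyad :: "'a measure \<Rightarrow> 'a set \<Rightarrow> nat \<Rightarrow> nat \<Rightarrow> 'a set" where
  "dyad M E 0 k = (if k = 0 then {} else E)"
| "dyad M E (Suc n) k = (if even k then dyad M E n (k div 2)
      else midset M (dyad M E n (k div 2)) (dyad M E n (k div 2 + 1)))"

context prob_space
begin

lemma midset:
  assumes na: "nonatomic M" and "A \<in> sets M" "C \<in> sets M" "A \<subseteq> C"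
  shows "midset M A C \<in> sets M \<and> A \<subseteq> midset M A C \<and> midset M A C \<subseteq> C \<and>
      prob (midset M A C) = (prob A + prob C) / 2"
proof -
  have "prob A \<le> prob C" using assms finite_measure_mono by auto
  then have "\<exists>B. B \<in> sets M \<and> A \<subseteq> B \<and> B \<subseteq> C \<and> prob B = (prob A + prob C) / 2"
    using sierpinski_between[OF na assms(2-4), of "(prob A + prob C) / 2"] by auto
  then show ?thesis unfolding midset_def by (rule someI_ex)
qed

lemma dyad_props:
  assumes na: "nonatomic M" and E: "E \<in> sets M"
  shows "\<forall>k. dyad M E n k \<in> sets M \<and> dyad M E n k \<subseteq> E \<and>
     prob (dyad M E n k) = min (real k / 2^n) 1 * prob E \<and> dyad M E n k \<subseteq> dyad M E n (Suc k)"
proof (induction n)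
  case 0 then show ?case using E by auto
next
  case (Suc n)
  show ?case
  proof
    fix k :: nat
    define j where "j = k div 2"
    define A where "A = dyad M E n j"
    define C where "C = dyad M E n (Suc j)"
    have A: "A \<in> sets M" "A \<subseteq> E" "prob A = min (real j / 2^n) 1 * prob E" "A \<subseteq> C"
      using Suc unfolding A_def C_def by auto
    have C: "C \<in> sets M" "C \<subseteq> E" "prob C = min (real (Suc j) / 2^n) 1 * prob E"
      using Suc unfolding C_def by auto
    have mid: "midset M A C \<in> sets M \<and> A \<subseteq> midset M A C \<and> midset M A C \<subseteq> C \<and>
      prob (midset M A C) = (prob A + prob C) / 2" using midset[OF na A(1) C(1) A(4)] .
    have N: "(2::real)^n > 0" by simp
    show "dyad M E (Suc n) k \<in> sets M \<and> dyad M E (Suc n) k \<subseteq> E \<and>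
     prob (dyad M E (Suc n) k) = min (real k / 2^Suc n) 1 * prob E \<and>
     dyad M E (Suc n) k \<subseteq> dyad M E (Suc n) (Suc k)"
    proof (cases "even k")
      case True
      then have k: "k = 2 * j" unfolding j_def by auto
      have "odd (Suc k)" "Suc k div 2 = j" using True k by auto
      then have "dyad M E (Suc n) (Suc k) = midset M A C" by (simp add: A_def C_def)
      moreover have "dyad M E (Suc n) k = A" using True by (simp add: A_def j_def)
      moreover have "real k / 2^Suc n = real j / 2^n" using k by simp
      ultimately show ?thesis using A mid by auto
    next
      case False
      then have k: "k = 2 * j + 1" unfolding j_def by presburger
      have "even (Suc k)" "Suc k div 2 = Suc j" using False k by auto
      then have d1: "dyad M E (Suc n) (Suc k) = C" by (simp add: C_def)
      have d2: "dyad M E (Suc n) k = midset M A C" using False by (simp add: A_def C_def j_def)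
      have ar: "(min (real j / 2^n) 1 + min (real (Suc j) / 2^n) 1) / 2
          = min (real k / 2^Suc n) 1"
      proof (cases "Suc j \<le> 2^n")
        case True
        then have h1: "real j + 1 \<le> 2^n" by (metis of_nat_Suc add.commute of_nat_le_iff of_nat_numeral of_nat_power)
        have h0: "real j \<le> 2^n" using h1 by linarith
        have e1: "min (real j / 2^n) 1 = real j / 2^n" using h0 N by (simp add: min_def field_simps)
        have e2: "min (real (Suc j) / 2^n) 1 = (real j + 1) / 2^n" using h1 N by (simp add: min_def field_simps)
        have e3: "min (real k / 2^Suc n) 1 = (2 * real j + 1) / 2^Suc n" using h1 N k by (simp add: min_def field_simps)
        show ?thesis unfolding e1 e2 e3 using N by (simp add: field_simps)
      next
        case False
        then have "j \<ge> 2^n" by simp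
        then have h1: "real j \<ge> 2^n" by (metis of_nat_le_iff of_nat_numeral of_nat_power)
        have e1: "min (real j / 2^n) 1 = 1" using h1 N by (simp add: min_def field_simps)
        have h2: "real (Suc j) \<ge> 2^n" using h1 by linarith
        have e2: "min (real (Suc j) / 2^n) 1 = 1" using h2 N by (simp add: min_def field_simps del: of_nat_Suc)
        have rk: "real k = 2 * real j + 1" using k by simp
        have h3: "real k \<ge> 2^Suc n" using h1 rk unfolding power_Suc by linarith
        have e3: "min (real k / 2^Suc n) 1 = 1" using h3 by (simp add: min_def field_simps del: power_Suc)
        show ?thesis unfolding e1 e2 e3 by simp
      qed
      have gen: "\<And>a b s::real. (a * s + b * s) / 2 = ((a + b) / 2) * s" by algebra
      have "prob (midset M A C) = (prob A + prob C) / 2" using mid by simp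
      also have "\<dots> = ((min (real j / 2^n) 1 + min (real (Suc j) / 2^n) 1) / 2) * prob E"
        unfolding A(3) C(3) by (rule gen)
      also have "\<dots> = min (real k / 2^Suc n) 1 * prob E" unfolding ar ..
      finally have "prob (midset M A C) = min (real k / 2^Suc n) 1 * prob E" .
      then show ?thesis unfolding d1 d2 using C mid A by auto
    qed
  qed
qed

end


lemma dyad_shift: "dyad M E (n + d) (k * 2^d) = dyad M E n k"
  by (induction d) (auto simp: mult.assoc[symmetric])

lemma nat_floor_bounds:
  fixes y :: real assumes "0 \<le> y"
  shows "real (nat \<lfloor>y\<rfloor>) \<le> y" "y < real (nat \<lfloor>y\<rfloor>) + 1"
  using assms by (simp_all add: of_nat_nat)

lemma half_pow_sandwich:
  fixes a b c :: real
  assumes "\<And>n. a \<le> b + c * (1/2)^n"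
  shows "a \<le> b"
proof (rule ccontr)
  assume "\<not> a \<le> b"
  then have ab: "a - b > 0" by simp
  show False
  proof (cases "c \<le> 0")
    case True then show False using assms[of 0] ab by simp
  next
    case False
    then have "(a - b) / c > 0" using ab by simp
    then obtain n where n: "(1/2::real)^n < (a - b) / c" using real_arch_pow_inv[of "(a-b)/c" "1/2"] by auto
    then have "c * (1/2)^n < a - b" using False by (simp add: field_simps)
    then show False using assms[of n] by simp
  qed
qed

context prob_space
begin

lemma dyad_mono:
  assumes na: "nonatomic M" and E: "E \<in> sets M" and "k \<le> k'"
  shows "dyad M E n k \<subseteq> dyad M E n k'"
  using dyad_props[OF na E, of n] lift_Suc_mono_le[of "dyad M E n" k k'] assms(3) by auto

lemma dyad_le:
  assumes na: "nonatomic M" and E: "E \<in> sets M" and le: "real k / 2^m \<le> real j / 2^n"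
  shows "dyad M E m k \<subseteq> dyad M E n j"
proof -
  have "real k * 2^n \<le> real j * 2^m" using le by (simp add: field_simps)
  then have "real (k * 2^n) \<le> real (j * 2^m)" by simp
  then have le': "k * 2^n \<le> j * 2^m" by linarith
  have "dyad M E m k = dyad M E (m + n) (k * 2^n)" by (rule dyad_shift[symmetric])
  also have "\<dots> \<subseteq> dyad M E (m + n) (j * 2^m)" by (rule dyad_mono[OF na E le'])
  also have "\<dots> = dyad M E n j" using dyad_shift[of M E n m j] by (simp add: add.commute)
  finally show ?thesis .
qed

end


context prob_space
begin

lemma uniform_on:
  assumes na: "nonatomic M" and E: "E \<in> sets M"
  shows "\<exists>V \<in> borel_measurable M. (\<forall>\<omega>. 0 < V \<omega> \<and> V \<omega> < 1) \<and>
     (\<forall>x. 0 \<le> x \<longrightarrow> x \<le> 1 \<longrightarrow> prob (E \<inter> {\<omega>. V \<omega> \<le> x}) = x * prob E)"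
proof -
  define S where "S \<omega> = {real k / 2^n | k n. \<omega> \<in> dyad M E n k}" for \<omega>
  define W where "W \<omega> = (if \<omega> \<in> E then Inf (S \<omega>) else 1/2)" for \<omega>
  define J where "J y n = nat \<lfloor>y * 2^n\<rfloor> + 2" for y :: real and n :: nat
  have props: "dyad M E n k \<in> sets M \<and> dyad M E n k \<subseteq> E \<and>
      prob (dyad M E n k) = min (real k / 2^n) 1 * prob E" for n k
    using dyad_props[OF na E, of n] by blast
  have Esp: "E \<subseteq> space M" using E sets.sets_into_space by auto
  have ne: "1 \<in> S \<omega>" if "\<omega> \<in> E" for \<omega>
    unfolding S_def using that by (auto intro!: exI[of _ 1] exI[of _ 0])
  have bdd: "bdd_below (S \<omega>)" for \<omega> by (auto simp: S_def intro!: bdd_belowI[of _ 0])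
  have a: "Inf (S \<omega>) \<le> real k / 2^n" if "\<omega> \<in> dyad M E n k" for \<omega> n k
    using that bdd by (intro cInf_lower) (auto simp: S_def)
  have nonneg: "0 \<le> Inf (S \<omega>)" if "\<omega> \<in> E" for \<omega>
    using ne[OF that] by (intro cInf_greatest) (auto simp: S_def)
  have le1: "Inf (S \<omega>) \<le> 1" if "\<omega> \<in> E" for \<omega> using a[of \<omega> 0 1] that by simp
  have Jb: "y + 1/2^n \<le> real (J y n) / 2^n" "real (J y n) / 2^n \<le> y + 2 * (1/2)^n"
    if "0 \<le> y" for y n
  proof -
    have f: "real (nat \<lfloor>y * 2^n\<rfloor>) \<le> y * 2^n" "y * 2^n < real (nat \<lfloor>y * 2^n\<rfloor>) + 1"
      using nat_floor_bounds[of "y * 2^n"] that by auto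
    have JJ: "real (J y n) = real (nat \<lfloor>y * 2^n\<rfloor>) + 2" by (simp add: J_def)
    have t: "(2::real)^n > 0" by simp
    have e1: "y + 1/2^n = (y * 2^n + 1) / 2^n" using t by (simp add: field_simps)
    have e2: "y + 2 * (1/2)^n = (y * 2^n + 2) / 2^n" using t by (simp add: field_simps power_one_over)
    have "(y * 2^n + 1) / 2^n \<le> real (J y n) / 2^n"
      by (intro divide_right_mono) (use f JJ in linarith, simp)
    then show "y + 1/2^n \<le> real (J y n) / 2^n" using e1 by simp
    have "real (J y n) / 2^n \<le> (y * 2^n + 2) / 2^n"
      by (intro divide_right_mono) (use f JJ in linarith, simp)
    then show "real (J y n) / 2^n \<le> y + 2 * (1/2)^n" using e2 by simp
  qed
  have b: "\<omega> \<in> dyad M E n (J y n)" if bw: "\<omega> \<in> E" "0 \<le> y" "Inf (S \<omega>) \<le> y" for \<omega> y n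
  proof -
    have "(0::real) < 1/2^n" by simp
    then have "Inf (S \<omega>) < y + 1/2^n" using bw by linarith
    then obtain z where "z \<in> S \<omega>" "z < y + 1/2^n"
      using cInf_less_iff[of "S \<omega>" "y + 1/2^n"] ne[OF bw(1)] bdd[of \<omega>] by auto
    then obtain m k where mk: "z = real k / 2^m" "\<omega> \<in> dyad M E m k" by (auto simp: S_def)
    have "real k / 2^m \<le> real (J y n) / 2^n" using Jb[OF bw(2), of n] mk \<open>z < _\<close> by linarith
    then show ?thesis using dyad_le[OF na E] mk by blast
  qed
  have c: "Inf (S \<omega>) \<le> y" if "0 \<le> y" "\<And>n. \<omega> \<in> dyad M E n (J y n)" for \<omega> y
  proof (rule half_pow_sandwich[where c=2])
    fix n
    show "Inf (S \<omega>) \<le> y + 2 * (1/2)^n" using a[OF that(2)[of n]] Jb[OF that(1), of n] by linarith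
  qed
  have set_eq: "{\<omega> \<in> E. Inf (S \<omega>) \<le> y} = E \<inter> (\<Inter>n. dyad M E n (J y n))" if "0 \<le> y" for y
  proof (intro equalityI subsetI)
    fix \<omega> assume "\<omega> \<in> {\<omega> \<in> E. Inf (S \<omega>) \<le> y}"
    then show "\<omega> \<in> E \<inter> (\<Inter>n. dyad M E n (J y n))" using b[OF _ that] by auto
  next
    fix \<omega> assume w: "\<omega> \<in> E \<inter> (\<Inter>n. dyad M E n (J y n))"
    then have "Inf (S \<omega>) \<le> y" using c[OF that, of \<omega>] by blast
    then show "\<omega> \<in> {\<omega> \<in> E. Inf (S \<omega>) \<le> y}" using w by blast
  qed
  have set_sets: "{\<omega> \<in> E. Inf (S \<omega>) \<le> y} \<in> sets M" for y
  proof (cases "0 \<le> y")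
    case True
    have "(\<Inter>n. dyad M E n (J y n)) \<in> sets M"
      using props by (intro sets.countable_INT) auto
    then show ?thesis using set_eq[OF True] E by auto
  next
    case False
    have "{\<omega> \<in> E. Inf (S \<omega>) \<le> y} = {}"
    proof -
      { fix \<omega> assume "\<omega> \<in> E" "Inf (S \<omega>) \<le> y"
        then have False using nonneg[of \<omega>] False by linarith }
      then show ?thesis by blast
    qed
    then show ?thesis using sets.empty_sets by metis
  qed
  have Wmeas[measurable]: "W \<in> borel_measurable M"
    unfolding borel_measurable_iff_le
  proof
    fix y
    have "{\<omega> \<in> space M. W \<omega> \<le> y} = {\<omega> \<in> E. Inf (S \<omega>) \<le> y} \<union>
        (if 1/2 \<le> y then space M - E else {})"
      using Esp by (auto simp: W_def)
    then show "{\<omega> \<in> space M. W \<omega> \<le> y} \<in> sets M" using set_sets E by auto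
  qed
  have cdfW: "prob {\<omega> \<in> E. Inf (S \<omega>) \<le> x} = x * prob E" if x: "0 \<le> x" "x \<le> 1" for x
  proof (rule antisym)
    show "prob {\<omega> \<in> E. Inf (S \<omega>) \<le> x} \<le> x * prob E"
    proof (rule half_pow_sandwich[where c="2 * prob E"])
      fix n
      have "{\<omega> \<in> E. Inf (S \<omega>) \<le> x} \<subseteq> dyad M E n (J x n)"
      proof
        fix \<omega> assume "\<omega> \<in> {\<omega> \<in> E. Inf (S \<omega>) \<le> x}"
        then show "\<omega> \<in> dyad M E n (J x n)" using b[of \<omega> x n] x by simp
      qed
      then have "prob {\<omega> \<in> E. Inf (S \<omega>) \<le> x} \<le> prob (dyad M E n (J x n))"
        using props by (intro finite_measure_mono) auto
      also have "\<dots> \<le> (real (J x n) / 2^n) * prob E" using props[of n "J x n"]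
        by (intro order.trans[OF eq_refl mult_right_mono]) auto
      also have "\<dots> \<le> (x + 2 * (1/2)^n) * prob E" using Jb[OF x(1), of n]
        by (intro mult_right_mono) auto
      finally show "prob {\<omega> \<in> E. Inf (S \<omega>) \<le> x} \<le> x * prob E + 2 * prob E * (1/2)^n"
        by (simp add: algebra_simps)
    qed
    show "x * prob E \<le> prob {\<omega> \<in> E. Inf (S \<omega>) \<le> x}"
    proof (rule half_pow_sandwich[where c="prob E"])
      fix n
      define f where "f = nat \<lfloor>x * 2^n\<rfloor>"
      have f: "real f \<le> x * 2^n" "x * 2^n < real f + 1"
        using nat_floor_bounds[of "x * 2^n"] x unfolding f_def by auto
      have t: "(2::real)^n > 0" by simp
      have f1a: "real f / 2^n \<le> x" using f t by (simp add: field_simps)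
      have e: "x - (1/2)^n = (x * 2^n - 1) / 2^n" using t by (simp add: field_simps power_one_over)
      have "(x * 2^n - 1) / 2^n \<le> real f / 2^n"
        by (intro divide_right_mono) (use f in linarith, simp)
      then have f1: "real f / 2^n \<le> x" "x - (1/2)^n \<le> real f / 2^n" using e f1a by simp_all
      have "dyad M E n f \<subseteq> {\<omega> \<in> E. Inf (S \<omega>) \<le> x}"
      proof
        fix \<omega> assume w: "\<omega> \<in> dyad M E n f"
        then have "Inf (S \<omega>) \<le> x" using a[OF w] f1 by linarith
        moreover have "\<omega> \<in> E" using w props[of n f] by blast
        ultimately show "\<omega> \<in> {\<omega> \<in> E. Inf (S \<omega>) \<le> x}" by simp
      qed
      then have "prob (dyad M E n f) \<le> prob {\<omega> \<in> E. Inf (S \<omega>) \<le> x}"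
        using set_sets by (intro finite_measure_mono) auto
      moreover have "prob (dyad M E n f) = (real f / 2^n) * prob E"
      proof -
        have "real f / 2^n \<le> 1" using f1 x by linarith
        then have "min (real f / 2^n) 1 = real f / 2^n" by (rule min_absorb1)
        then show ?thesis using props[of n f] by simp
      qed
      moreover have "(x - (1/2)^n) * prob E \<le> (real f / 2^n) * prob E"
        using f1 by (intro mult_right_mono) auto
      ultimately show "x * prob E \<le> prob {\<omega> \<in> E. Inf (S \<omega>) \<le> x} + prob E * (1/2)^n"
        by (simp add: algebra_simps)
    qed
  qed
  define N where "N = E \<inter> {\<omega> \<in> space M. W \<omega> \<le> 0 \<or> 1 \<le> W \<omega>}"
  have Nsets: "N \<in> sets M" unfolding N_def using E by measurable
  have N0: "prob {\<omega> \<in> E. Inf (S \<omega>) \<le> 0} = 0" using cdfW[of 0] by simp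
  have N1: "prob (E \<inter> {\<omega> \<in> space M. 1 \<le> W \<omega>}) = 0"
  proof -
    have s1: "E \<inter> {\<omega> \<in> space M. 1 \<le> W \<omega>} \<in> sets M" using E by measurable
    have "prob (E \<inter> {\<omega> \<in> space M. 1 \<le> W \<omega>}) \<le> 0"
    proof (rule half_pow_sandwich[where c="prob E"])
      fix n
      define h :: real where "h = (1/2)^n"
      have h: "0 < h" "h \<le> 1" unfolding h_def by (auto simp: power_le_one)
      have "E \<inter> {\<omega> \<in> space M. 1 \<le> W \<omega>} \<subseteq> {\<omega> \<in> E. Inf (S \<omega>) \<le> 1} - {\<omega> \<in> E. Inf (S \<omega>) \<le> 1 - h}"
      proof
        fix \<omega> assume w: "\<omega> \<in> E \<inter> {\<omega> \<in> space M. 1 \<le> W \<omega>}"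
        then have "\<omega> \<in> E" "1 \<le> Inf (S \<omega>)" by (auto simp: W_def)
        then show "\<omega> \<in> {\<omega> \<in> E. Inf (S \<omega>) \<le> 1} - {\<omega> \<in> E. Inf (S \<omega>) \<le> 1 - h}"
          using le1[of \<omega>] h by auto
      qed
      then have "prob (E \<inter> {\<omega> \<in> space M. 1 \<le> W \<omega>}) \<le>
          prob ({\<omega> \<in> E. Inf (S \<omega>) \<le> 1} - {\<omega> \<in> E. Inf (S \<omega>) \<le> 1 - h})"
        using set_sets by (intro finite_measure_mono) auto
      also have "\<dots> = prob {\<omega> \<in> E. Inf (S \<omega>) \<le> 1} - prob {\<omega> \<in> E. Inf (S \<omega>) \<le> 1 - h}"
        using set_sets h by (intro finite_measure_Diff) auto
      also have "\<dots> = h * prob E" using cdfW[of 1] cdfW[of "1 - h"] h by (simp add: algebra_simps)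
      finally show "prob (E \<inter> {\<omega> \<in> space M. 1 \<le> W \<omega>}) \<le> 0 + prob E * (1/2)^n"
        by (simp add: h_def mult.commute)
    qed
    then show ?thesis using measure_nonneg by (simp add: antisym)
  qed
  have Nnull: "N \<in> null_sets M"
  proof -
    have "N = {\<omega> \<in> E. Inf (S \<omega>) \<le> 0} \<union> (E \<inter> {\<omega> \<in> space M. 1 \<le> W \<omega>})"
      using Esp by (auto simp: N_def W_def)
    moreover have "E \<inter> {\<omega> \<in> space M. 1 \<le> W \<omega>} \<in> sets M" using E by measurable
    ultimately have "prob N \<le> prob {\<omega> \<in> E. Inf (S \<omega>) \<le> 0} + prob (E \<inter> {\<omega> \<in> space M. 1 \<le> W \<omega>})"
      using set_sets[of 0] by (simp add: measure_subadditive)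
    then have "prob N = 0" using N0 N1 measure_nonneg[of M N] by simp
    then show ?thesis using Nsets by (auto simp: emeasure_eq_measure)
  qed
  define V where "V \<omega> = (if 0 < W \<omega> \<and> W \<omega> < 1 then W \<omega> else 1/2)" for \<omega>
  have Vmeas: "V \<in> borel_measurable M" unfolding V_def by measurable
  have Vb: "\<forall>\<omega>. 0 < V \<omega> \<and> V \<omega> < 1" by (auto simp: V_def)
  have "prob (E \<inter> {\<omega>. V \<omega> \<le> x}) = x * prob E" if x: "0 \<le> x" "x \<le> 1" for x
  proof -
    have s1: "E \<inter> {\<omega>. V \<omega> \<le> x} \<in> sets M"
    proof -
      have "E \<inter> {\<omega>. V \<omega> \<le> x} = E \<inter> {\<omega> \<in> space M. V \<omega> \<le> x}" using Esp by auto
      also have "\<dots> \<in> sets M" using E Vmeas by measurable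
      finally show ?thesis .
    qed
    have "(E \<inter> {\<omega>. V \<omega> \<le> x}) - N = {\<omega> \<in> E. Inf (S \<omega>) \<le> x} - N"
      using Esp by (auto simp: N_def V_def W_def)
    then have "prob (E \<inter> {\<omega>. V \<omega> \<le> x}) = prob {\<omega> \<in> E. Inf (S \<omega>) \<le> x}"
      using measure_Diff_null_set[OF s1 Nnull] measure_Diff_null_set[OF set_sets Nnull] by simp
    then show ?thesis using cdfW[OF x] by simp
  qed
  then show ?thesis using Vmeas Vb by blast
qed

end


context prob_space
begin

definition unif_on :: "'a set \<Rightarrow> ('a \<Rightarrow> real) \<Rightarrow> bool" where
  "unif_on E V \<longleftrightarrow> V \<in> borel_measurable M \<and> (\<forall>\<omega>. 0 < V \<omega> \<and> V \<omega> < 1) \<and>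
     (\<forall>x. 0 \<le> x \<longrightarrow> x \<le> 1 \<longrightarrow> prob (E \<inter> {\<omega>. V \<omega> \<le> x}) = x * prob E)"

lemma unif_on_ex: "nonatomic M \<Longrightarrow> E \<in> sets M \<Longrightarrow> \<exists>V. unif_on E V"
  using uniform_on unfolding unif_on_def by blast

lemma unif_affine:
  assumes E: "E \<in> sets M" and V: "unif_on E V" and a: "0 \<le> a" "prob E = a"
  shows "prob (E \<inter> {\<omega>. b + a * V \<omega> \<le> x}) = max 0 (min (x - b) a)"
proof -
  have Vm: "V \<in> borel_measurable M" and Vb: "\<And>\<omega>. 0 < V \<omega> \<and> V \<omega> < 1"
    and Vc: "\<And>x. 0 \<le> x \<Longrightarrow> x \<le> 1 \<Longrightarrow> prob (E \<inter> {\<omega>. V \<omega> \<le> x}) = x * prob E"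
    using V unfolding unif_on_def by auto
  have Esp: "E \<subseteq> space M" using E sets.sets_into_space by auto
  show ?thesis
  proof (cases "a = 0")
    case True
    have s: "E \<inter> {\<omega>. b + a * V \<omega> \<le> x} = E \<inter> {\<omega> \<in> space M. b + a * V \<omega> \<le> x}" using Esp by auto
    have "E \<inter> {\<omega> \<in> space M. b + a * V \<omega> \<le> x} \<in> sets M" using E Vm by measurable
    then have "prob (E \<inter> {\<omega>. b + a * V \<omega> \<le> x}) \<le> prob E" unfolding s using E
      by (intro finite_measure_mono) auto
    then have "prob (E \<inter> {\<omega>. b + a * V \<omega> \<le> x}) = 0" using a True measure_nonneg[of M] by (simp add: antisym)
    then show ?thesis using True by (simp add: max_def min_def)
  next
    case False
    then have ap: "a > 0" using a by simp
    define z where "z = (x - b) / a"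
    have eq: "{\<omega>. b + a * V \<omega> \<le> x} = {\<omega>. V \<omega> \<le> z}"
      using ap by (auto simp: z_def field_simps)
    show ?thesis
    proof (cases "z < 0")
      case True
      have "E \<inter> {\<omega>. V \<omega> \<le> z} = {}"
      proof -
        { fix \<omega> assume "V \<omega> \<le> z" then have False using Vb[of \<omega>] True by linarith }
        then show ?thesis by blast
      qed
      moreover have "x - b < 0" using True ap by (simp add: z_def divide_less_0_iff)
      ultimately show ?thesis unfolding eq by simp
    next
      case False
      show ?thesis
      proof (cases "z \<le> 1")
        case True
        then have "prob (E \<inter> {\<omega>. V \<omega> \<le> z}) = z * a" using Vc[of z] False a by simp
        moreover have "z * a = x - b" using ap by (simp add: z_def)
        moreover have "0 \<le> x - b" "x - b \<le> a" using False True ap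
          by (auto simp: z_def field_simps)
        ultimately show ?thesis unfolding eq by simp
      next
        case False
        have "E \<inter> {\<omega>. V \<omega> \<le> z} = E"
        proof -
          { fix \<omega> have "V \<omega> \<le> z" using Vb[of \<omega>] False by linarith }
          then show ?thesis by blast
        qed
        moreover have "x - b > a" using False ap by (simp add: z_def field_simps)
        ultimately show ?thesis unfolding eq using a by simp
      qed
    qed
  qed
qed

lemma glue_uniform:
  assumes B: "B \<in> sets M" and C: "C \<in> sets M" and disj: "B \<inter> C = {}"
    and PB: "prob B = r" and PC: "prob C = r" and r: "0 < r" "2 * r \<le> 1"
    and VB: "unif_on B VB" and VC: "unif_on C VC" and VD: "unif_on (space M - (B \<union> C)) VD"
  defines "U \<equiv> \<lambda>\<omega>. if \<omega> \<in> B then r * VB \<omega> else if \<omega> \<in> C then (1 - r) + r * VC \<omega>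
                   else r + (1 - 2 * r) * VD \<omega>"
  shows "U \<in> borel_measurable M" "\<And>\<omega>. 0 < U \<omega> \<and> U \<omega> < 1"
    "\<And>x. 0 \<le> x \<Longrightarrow> x \<le> 1 \<Longrightarrow> prob {\<omega> \<in> space M. U \<omega> \<le> x} = x"
proof -
  have [measurable]: "VB \<in> borel_measurable M" "VC \<in> borel_measurable M" "VD \<in> borel_measurable M"
    using VB VC VD unfolding unif_on_def by auto
  have [measurable]: "B \<in> sets M" "C \<in> sets M" using B C by auto
  have Bsp0: "B \<subseteq> space M" "C \<subseteq> space M"
    by (rule sets.sets_into_space[OF B], rule sets.sets_into_space[OF C])
  have bB: "0 < VB \<omega> \<and> VB \<omega> < 1" "0 < VC \<omega> \<and> VC \<omega> < 1" "0 < VD \<omega> \<and> VD \<omega> < 1" for \<omega>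
    using VB VC VD unfolding unif_on_def by auto
  show "U \<in> borel_measurable M" unfolding U_def by measurable
  show "0 < U \<omega> \<and> U \<omega> < 1" for \<omega>
  proof -
    have "r * VB \<omega> < r * 1" using bB(1)[of \<omega>] r by (intro mult_strict_left_mono) auto
    moreover have "r * VC \<omega> < r * 1" using bB(2)[of \<omega>] r by (intro mult_strict_left_mono) auto
    moreover have "0 < r * VB \<omega>" "0 < r * VC \<omega>" using bB(1,2)[of \<omega>] r by auto
    moreover have "0 \<le> (1 - 2 * r) * VD \<omega>" "(1 - 2 * r) * VD \<omega> \<le> 1 - 2 * r"
      using bB(3)[of \<omega>] r by (auto intro: mult_left_le)
    ultimately have h: "r * VB \<omega> < r" "r * VC \<omega> < r" "0 < r * VB \<omega>" "0 < r * VC \<omega>"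
      "0 \<le> (1 - 2 * r) * VD \<omega>" "(1 - 2 * r) * VD \<omega> \<le> 1 - 2 * r" by simp_all
    have u1: "\<omega> \<in> B \<Longrightarrow> U \<omega> = r * VB \<omega>" unfolding U_def by simp
    have u2: "\<omega> \<notin> B \<Longrightarrow> \<omega> \<in> C \<Longrightarrow> U \<omega> = (1 - r) + r * VC \<omega>" unfolding U_def by simp
    have u3: "\<omega> \<notin> B \<Longrightarrow> \<omega> \<notin> C \<Longrightarrow> U \<omega> = r + (1 - 2 * r) * VD \<omega>" unfolding U_def by simp
    show ?thesis
    proof (cases "\<omega> \<in> B")
      case True then show ?thesis using u1 h r by linarith
    next
      case nB: False
      show ?thesis
      proof (cases "\<omega> \<in> C")
        case True then show ?thesis using u2[OF nB] h r by linarith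
      next
        case False then show ?thesis using u3[OF nB] h r by linarith
      qed
    qed
  qed
  fix x :: real assume x: "0 \<le> x" "x \<le> 1"
  define D where "D = space M - (B \<union> C)"
  have Dsets: "D \<in> sets M" unfolding D_def using B C by auto
  have PD: "prob D = 1 - 2 * r"
  proof -
    have "prob (B \<union> C) = r + r" using finite_measure_Union[OF B C disj] PB PC by simp
    moreover have "prob D = prob (space M) - prob (B \<union> C)" unfolding D_def
      using B C Bsp0 by (intro finite_measure_Diff) auto
    ultimately show ?thesis using prob_space by simp
  qed
  note Bsp = Bsp0
  have seteq: "{\<omega> \<in> space M. U \<omega> \<le> x} = ((B \<inter> {\<omega>. 0 + r * VB \<omega> \<le> x}) \<union>
      (C \<inter> {\<omega>. (1 - r) + r * VC \<omega> \<le> x})) \<union> (D \<inter> {\<omega>. r + (1 - 2 * r) * VD \<omega> \<le> x})"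
    using Bsp disj unfolding U_def D_def by auto
  have s1: "B \<inter> {\<omega>. 0 + r * VB \<omega> \<le> x} \<in> sets M"
  proof -
    have "B \<inter> {\<omega>. 0 + r * VB \<omega> \<le> x} = B \<inter> {\<omega> \<in> space M. 0 + r * VB \<omega> \<le> x}" using Bsp by auto
    also have "\<dots> \<in> sets M" by measurable
    finally show ?thesis .
  qed
  have s2: "C \<inter> {\<omega>. (1 - r) + r * VC \<omega> \<le> x} \<in> sets M"
  proof -
    have "C \<inter> {\<omega>. (1 - r) + r * VC \<omega> \<le> x} = C \<inter> {\<omega> \<in> space M. (1 - r) + r * VC \<omega> \<le> x}" using Bsp by auto
    also have "\<dots> \<in> sets M" by measurable
    finally show ?thesis .
  qed
  have s3: "D \<inter> {\<omega>. r + (1 - 2 * r) * VD \<omega> \<le> x} \<in> sets M"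
  proof -
    have "D \<inter> {\<omega>. r + (1 - 2 * r) * VD \<omega> \<le> x} = D \<inter> {\<omega> \<in> space M. r + (1 - 2 * r) * VD \<omega> \<le> x}"
      unfolding D_def by auto
    also have "\<dots> \<in> sets M" using Dsets by measurable
    finally show ?thesis .
  qed
  have p1: "prob (B \<inter> {\<omega>. 0 + r * VB \<omega> \<le> x}) = max 0 (min (x - 0) r)"
    using unif_affine[OF B VB _ PB, where b=0 and x=x] r by simp
  have p2: "prob (C \<inter> {\<omega>. (1 - r) + r * VC \<omega> \<le> x}) = max 0 (min (x - (1 - r)) r)"
    using unif_affine[OF C VC _ PC, where b="1 - r" and x=x] r by simp
  have p3: "prob (D \<inter> {\<omega>. r + (1 - 2 * r) * VD \<omega> \<le> x}) = max 0 (min (x - r) (1 - 2 * r))"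
    using unif_affine[OF Dsets VD[folded D_def] _ PD, where b=r and x=x] r by simp
  have "prob {\<omega> \<in> space M. U \<omega> \<le> x} = max 0 (min (x - 0) r) + max 0 (min (x - (1 - r)) r)
      + max 0 (min (x - r) (1 - 2 * r))"
    unfolding seteq p1[symmetric] p2[symmetric] p3[symmetric] using s1 s2 s3 disj unfolding D_def
    by (subst finite_measure_Union, auto, subst finite_measure_Union, auto)
  also have "\<dots> = x" using x r by (simp add: max_def min_def)
  finally show "prob {\<omega> \<in> space M. U \<omega> \<le> x} = x" .
qed

end


context prob_space
begin

lemma cdf_distr_eq:
  assumes "Z \<in> borel_measurable M"
  shows "cdf (distr M borel Z) y = prob {\<omega> \<in> space M. Z \<omega> \<le> y}"
proof -
  have "cdf (distr M borel Z) y = prob (Z -` {..y} \<inter> space M)"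
    unfolding cdf_def using assms by (subst measure_distr) auto
  also have "Z -` {..y} \<inter> space M = {\<omega> \<in> space M. Z \<omega> \<le> y}" by auto
  finally show ?thesis .
qed

lemma quantile_galois:
  assumes Z: "Z \<in> borel_measurable M" and u: "0 < u" "u < 1"
  shows "Inf {y. u \<le> cdf (distr M borel Z) y} \<le> y \<longleftrightarrow> u \<le> cdf (distr M borel Z) y"
proof -
  define F where "F = cdf (distr M borel Z)"
  have RD: "real_distribution (distr M borel Z)" using Z by simp
  have FBM: "finite_borel_measure (distr M borel Z)" by (rule real_distribution.finite_borel_measure_M[OF RD])
  have mono: "a \<le> b \<Longrightarrow> F a \<le> F b" for a b
    unfolding F_def by (rule finite_borel_measure.cdf_nondecreasing[OF FBM])
  have top: "(F \<longlongrightarrow> 1) at_top" unfolding F_def by (rule real_distribution.cdf_lim_at_top_prob[OF RD])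
  have bot: "(F \<longlongrightarrow> 0) at_bot" unfolding F_def by (rule finite_borel_measure.cdf_lim_at_bot[OF FBM])
  have rc: "continuous (at_right a) F" for a unfolding F_def by (rule finite_borel_measure.cdf_is_right_cont[OF FBM])
  define S where "S = {y. u \<le> F y}"
  have "eventually (\<lambda>y. u < F y) at_top" using order_tendstoD(1)[OF top u(2)] .
  then obtain N1 where N1: "\<And>y. y \<ge> N1 \<Longrightarrow> u < F y" by (auto simp: eventually_at_top_linorder)
  have ne: "S \<noteq> {}" using N1[of N1] unfolding S_def by (metis empty_Collect_eq less_le_not_le nle_le)
  have "eventually (\<lambda>y. F y < u) at_bot" using order_tendstoD(2)[OF bot u(1)] .
  then obtain N0 where N0: "\<And>y. y \<le> N0 \<Longrightarrow> F y < u" by (auto simp: eventually_at_bot_linorder)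
  have bdd: "bdd_below S"
  proof (rule bdd_belowI[of _ N0])
    fix y assume "y \<in> S" then show "N0 \<le> y" using N0[of y] by (force simp: S_def)
  qed
  have "Inf S \<le> y \<longleftrightarrow> u \<le> F y"
  proof
    assume "u \<le> F y" then show "Inf S \<le> y" using bdd by (intro cInf_lower) (auto simp: S_def)
  next
    assume le: "Inf S \<le> y"
    have ev: "eventually (\<lambda>z. u \<le> F z) (at_right y)"
    proof -
      have "eventually (\<lambda>z. y < z) (at_right y)" by (simp add: eventually_at_right_less)
      then show ?thesis
      proof (rule eventually_mono)
        fix z assume "y < z"
        then have "Inf S < z" using le by simp
        then obtain w where "w \<in> S" "w < z" using cInf_less_iff[OF ne bdd] by auto
        then show "u \<le> F z" using mono[of w z] by (auto simp: S_def)
      qed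
    qed
    have "(F \<longlongrightarrow> F y) (at_right y)" using rc[of y] by (simp add: continuous_within)
    then show "u \<le> F y" using ev by (rule tendsto_lowerbound) simp
  qed
  then show ?thesis unfolding S_def F_def .
qed

lemma nonconst_cdf:
  assumes Z: "Z \<in> borel_measurable M" and nc: "\<not> as_constant M Z"
  shows "\<exists>y. 0 < cdf (distr M borel Z) y \<and> cdf (distr M borel Z) y < 1"
proof (rule ccontr)
  assume H: "\<not> ?thesis"
  define F where "F = cdf (distr M borel Z)"
  have RD: "real_distribution (distr M borel Z)" using Z by simp
  have FBM: "finite_borel_measure (distr M borel Z)" by (rule real_distribution.finite_borel_measure_M[OF RD])
  have mono: "a \<le> b \<Longrightarrow> F a \<le> F b" for a b
    unfolding F_def by (rule finite_borel_measure.cdf_nondecreasing[OF FBM])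
  have top: "(F \<longlongrightarrow> 1) at_top" unfolding F_def by (rule real_distribution.cdf_lim_at_top_prob[OF RD])
  have bot: "(F \<longlongrightarrow> 0) at_bot" unfolding F_def by (rule finite_borel_measure.cdf_lim_at_bot[OF FBM])
  have F01: "F y = 0 \<or> F y = 1" for y
  proof -
    have "0 \<le> F y" "F y \<le> 1" unfolding F_def
      using finite_borel_measure.cdf_nonneg[OF FBM] real_distribution.cdf_bounded_prob[OF RD] by auto
    moreover have "\<not> (0 < F y \<and> F y < 1)" using H unfolding F_def by blast
    ultimately show ?thesis by linarith
  qed
  define S where "S = {y. F y = 1}"
  have "eventually (\<lambda>y. 1/2 < F y) at_top" using order_tendstoD(1)[OF top, of "1/2"] by simp
  then obtain N1 where N1: "\<And>y. y \<ge> N1 \<Longrightarrow> 1/2 < F y" by (auto simp: eventually_at_top_linorder)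
  have ne: "S \<noteq> {}" using N1[of N1] F01[of N1] by (auto simp: S_def)
  have "eventually (\<lambda>y. F y < 1/2) at_bot" using order_tendstoD(2)[OF bot, of "1/2"] by simp
  then obtain N0 where N0: "\<And>y. y \<le> N0 \<Longrightarrow> F y < 1/2" by (auto simp: eventually_at_bot_linorder)
  have bdd: "bdd_below S"
  proof (rule bdd_belowI[of _ N0])
    fix y assume "y \<in> S" then show "N0 \<le> y" using N0[of y] by (force simp: S_def)
  qed
  define c where "c = Inf S"
  have above: "F y = 1" if cy: "c < y" for y
  proof -
    obtain w where "w \<in> S" "w < y" using cInf_less_iff[OF ne bdd] cy c_def by auto
    then show ?thesis using mono[of w y] F01[of y] by (auto simp: S_def)
  qed
  have below: "F y = 0" if "y < c" for y
  proof -
    have "y \<notin> S" using cInf_lower[OF _ bdd, of y] that c_def by force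
    then show ?thesis using F01[of y] by (auto simp: S_def)
  qed
  have Fe: "F y = prob {\<omega> \<in> space M. Z \<omega> \<le> y}" for y unfolding F_def by (rule cdf_distr_eq[OF Z])
  have ev1: "AE \<omega> in M. Z \<omega> \<le> c + inverse (real (Suc n))" for n
  proof -
    have "prob {\<omega> \<in> space M. Z \<omega> \<le> c + inverse (real (Suc n))} = 1"
      using above[of "c + inverse (real (Suc n))"] Fe by simp
    then show ?thesis using AE_prob_1 by force
  qed
  have ev2: "AE \<omega> in M. c - inverse (real (Suc n)) < Z \<omega>" for n
  proof -
    have s: "{\<omega> \<in> space M. Z \<omega> \<le> c - inverse (real (Suc n))} \<in> events" using Z by measurable
    have "prob {\<omega> \<in> space M. Z \<omega> \<le> c - inverse (real (Suc n))} = 0"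
      using below[of "c - inverse (real (Suc n))"] Fe by simp
    then have "prob (space M - {\<omega> \<in> space M. Z \<omega> \<le> c - inverse (real (Suc n))}) = 1"
      using prob_compl[OF s] by simp
    moreover have "space M - {\<omega> \<in> space M. Z \<omega> \<le> c - inverse (real (Suc n))}
        = {\<omega> \<in> space M. c - inverse (real (Suc n)) < Z \<omega>}" by auto
    ultimately show ?thesis using AE_prob_1 by force
  qed
  have "AE \<omega> in M. \<forall>n. Z \<omega> \<le> c + inverse (real (Suc n)) \<and> c - inverse (real (Suc n)) < Z \<omega>"
    using ev1 ev2 by (simp add: AE_all_countable AE_conj_iff)
  then have "AE \<omega> in M. Z \<omega> = c"
  proof (rule eventually_mono)
    fix \<omega> assume h: "\<forall>n. Z \<omega> \<le> c + inverse (real (Suc n)) \<and> c - inverse (real (Suc n)) < Z \<omega>"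
    show "Z \<omega> = c"
    proof (rule ccontr)
      assume "Z \<omega> \<noteq> c"
      then have "0 < \<bar>Z \<omega> - c\<bar>" by simp
      then obtain n where "inverse (real (Suc n)) < \<bar>Z \<omega> - c\<bar>" using reals_Archimedean by blast
      then show False using h[rule_format, of n] by linarith
    qed
  qed
  then show False using nc unfolding as_constant_def by blast
qed

lemma quantile_law:
  assumes Z: "Z \<in> borel_measurable M" and U: "U \<in> borel_measurable M"
    and Ub: "\<And>\<omega>. 0 < U \<omega> \<and> U \<omega> < 1"
    and Uc: "\<And>x. 0 \<le> x \<Longrightarrow> x \<le> 1 \<Longrightarrow> prob {\<omega> \<in> space M. U \<omega> \<le> x} = x"
  defines "q \<equiv> \<lambda>u. Inf {y. u \<le> cdf (distr M borel Z) y}"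
  shows "(\<lambda>\<omega>. q (U \<omega>)) \<in> borel_measurable M" "distr M borel (\<lambda>\<omega>. q (U \<omega>)) = distr M borel Z"
proof -
  define F where "F = cdf (distr M borel Z)"
  have RD: "real_distribution (distr M borel Z)" using Z by simp
  have FBM: "finite_borel_measure (distr M borel Z)" by (rule real_distribution.finite_borel_measure_M[OF RD])
  have F01: "0 \<le> F y" "F y \<le> 1" for y unfolding F_def
    using finite_borel_measure.cdf_nonneg[OF FBM] real_distribution.cdf_bounded_prob[OF RD] by auto
  have seq: "{\<omega> \<in> space M. q (U \<omega>) \<le> y} = {\<omega> \<in> space M. U \<omega> \<le> F y}" for y
    using quantile_galois[OF Z] Ub unfolding q_def F_def by auto
  show meas: "(\<lambda>\<omega>. q (U \<omega>)) \<in> borel_measurable M"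
    unfolding borel_measurable_iff_le seq
  proof
    fix a show "{w \<in> space M. U w \<le> F a} \<in> events" using U by measurable
  qed
  have RD2: "real_distribution (distr M borel (\<lambda>\<omega>. q (U \<omega>)))" using meas by simp
  have "cdf (distr M borel (\<lambda>\<omega>. q (U \<omega>))) = cdf (distr M borel Z)"
  proof
    fix y
    have "cdf (distr M borel (\<lambda>\<omega>. q (U \<omega>))) y = prob {\<omega> \<in> space M. q (U \<omega>) \<le> y}"
      by (rule cdf_distr_eq[OF meas])
    also have "\<dots> = F y" unfolding seq using Uc F01 by simp
    finally show "cdf (distr M borel (\<lambda>\<omega>. q (U \<omega>))) y = cdf (distr M borel Z) y" by (simp add: F_def)
  qed
  then show "distr M borel (\<lambda>\<omega>. q (U \<omega>)) = distr M borel Z"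
    using cdf_unique[OF RD2 RD] by simp
qed

end


lemma (in prob_space) same_law_integral:
  assumes "same_law M X1 X2"
  shows "integral\<^sup>L M X1 = integral\<^sup>L M X2"
proof -
  have m: "X1 \<in> borel_measurable M" "X2 \<in> borel_measurable M" and d: "distr M borel X1 = distr M borel X2"
    using assms unfolding same_law_def by auto
  have "integral\<^sup>L M X1 = integral\<^sup>L (distr M borel X1) (\<lambda>x. x)" using m by (simp add: integral_distr)
  also have "\<dots> = integral\<^sup>L (distr M borel X2) (\<lambda>x. x)" using d by simp
  also have "\<dots> = integral\<^sup>L M X2" using m by (simp add: integral_distr)
  finally show ?thesis .
qed

theorem proposition4p2:
  fixes M :: "'a measure" and \<X> \<X>s \<M> :: "('a \<Rightarrow> real) set" and Y :: "'a \<Rightarrow> real"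
  assumes "prob_space M" and "nonatomic M"
    and "rv_subspace M \<X>" and "law_invariant_set M \<X>"
    and "Linfty M \<subseteq> \<X>" and "\<X> \<subseteq> L1 M"
    and "rv_subspace M \<X>s" and "law_invariant_set M \<X>s"
    and "Linfty M \<subseteq> \<X>s" and "\<X>s \<subseteq> L1 M"
    and "\<forall>X\<in>\<X>. \<forall>Z\<in>\<X>s. integrable M (\<lambda>\<omega>. X \<omega> * Z \<omega>)"
    and "rv_subspace M \<M>" and "law_invariant_set M \<M>" and "\<M> \<subseteq> \<X>"
    and "\<exists>X\<in>\<M>. \<not> as_constant M X"
    and "Y \<in> \<X>s"
  shows "law_invariant_functional M \<M> (\<lambda>X. integral\<^sup>L M (\<lambda>\<omega>. X \<omega> * Y \<omega>))
           \<longleftrightarrow> as_constant M Y"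
proof -
  interpret prob_space M by fact
  note na = \<open>nonatomic M\<close>
  have Ymeas[measurable]: "Y \<in> borel_measurable M" using assms(7,16) unfolding rv_subspace_def by auto
  have Mmeas: "\<M> \<subseteq> borel_measurable M" using assms(12) unfolding rv_subspace_def by auto
  have Mint: "integrable M X" if "X \<in> \<M>" for X using that assms(6,14) unfolding L1_def by auto
  have Mprod: "integrable M (\<lambda>\<omega>. X \<omega> * Y \<omega>)" if "X \<in> \<M>" for X using that assms(11,14,16) by auto
  show ?thesis
  proof
    assume LI: "law_invariant_functional M \<M> (\<lambda>X. integral\<^sup>L M (\<lambda>\<omega>. X \<omega> * Y \<omega>))"
    show "as_constant M Y"
    proof (rule ccontr)
      assume ncY: "\<not> as_constant M Y"
      obtain X where X: "X \<in> \<M>" "\<not> as_constant M X" using assms(15) by blast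
      have Xmeas[measurable]: "X \<in> borel_measurable M" using X Mmeas by auto
      define FX where "FX = cdf (distr M borel X)"
      obtain y0 where y0: "0 < FX y0" "FX y0 < 1" using nonconst_cdf[OF Xmeas X(2)] FX_def by auto
      obtain t where t: "0 < cdf (distr M borel Y) t" "cdf (distr M borel Y) t < 1"
        using nonconst_cdf[OF Ymeas ncY] by auto
      define a where "a = prob {\<omega> \<in> space M. Y \<omega> \<le> t}"
      have a: "0 < a" "a < 1" using t cdf_distr_eq[OF Ymeas, of t] a_def by auto
      define Ylo where "Ylo = {\<omega> \<in> space M. Y \<omega> \<le> t}"
      define Yhi where "Yhi = {\<omega> \<in> space M. t < Y \<omega>}"
      have Ylo_s: "Ylo \<in> sets M" unfolding Ylo_def by measurable
      have Yhi_s: "Yhi \<in> sets M" unfolding Yhi_def by measurable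
      have "Yhi = space M - Ylo" unfolding Yhi_def Ylo_def by auto
      then have PYhi: "prob Yhi = 1 - a" using prob_compl[OF Ylo_s] a_def Ylo_def by simp
      define r where "r = min (min (FX y0) (1 - FX y0)) (min a (1 - a)) / 2"
      have m1: "0 < min (FX y0) (1 - FX y0)" "min (FX y0) (1 - FX y0) \<le> FX y0"
        "min (FX y0) (1 - FX y0) \<le> 1 - FX y0" using y0 by auto
      have m2: "0 < min a (1 - a)" "min a (1 - a) \<le> a" "min a (1 - a) \<le> 1 - a" using a by auto
      define m where "m = min (min (FX y0) (1 - FX y0)) (min a (1 - a))"
      have m: "0 < m" "m \<le> min (FX y0) (1 - FX y0)" "m \<le> min a (1 - a)"
        unfolding m_def using m1 m2 by auto
      have rm: "r = m / 2" unfolding r_def m_def by simp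
      have r: "0 < r" "r < FX y0" "r < 1 - FX y0" "r \<le> a" "r \<le> 1 - a" "2 * r \<le> 1"
        unfolding rm using m m1 m2 by linarith+
      obtain B where B: "B \<in> sets M" "B \<subseteq> Ylo" "prob B = r"
        using sierpinski[OF na Ylo_s, of r] r a_def Ylo_def by auto
      obtain C where C: "C \<in> sets M" "C \<subseteq> Yhi" "prob C = r"
        using sierpinski[OF na Yhi_s, of r] r PYhi by auto
      have disj: "B \<inter> C = {}"
      proof -
        { fix w assume "w \<in> B" "w \<in> C"
          then have "Y w \<le> t" "t < Y w" using B(2) C(2) unfolding Ylo_def Yhi_def by auto
          then have False by simp }
        then show ?thesis by blast
      qed
      have Dsets: "space M - (B \<union> C) \<in> sets M" using B C by auto
      obtain VB where VB: "unif_on B VB" using unif_on_ex[OF na B(1)] by auto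
      obtain VC where VC: "unif_on C VC" using unif_on_ex[OF na C(1)] by auto
      obtain VD where VD: "unif_on (space M - (B \<union> C)) VD" using unif_on_ex[OF na Dsets] by auto
      have VD': "unif_on (space M - (C \<union> B)) VD" using VD by (simp add: Un_commute)
      define U1 where "U1 = (\<lambda>\<omega>. if \<omega> \<in> B then r * VB \<omega> else if \<omega> \<in> C then (1 - r) + r * VC \<omega>
                   else r + (1 - 2 * r) * VD \<omega>)"
      define U2 where "U2 = (\<lambda>\<omega>. if \<omega> \<in> C then r * VC \<omega> else if \<omega> \<in> B then (1 - r) + r * VB \<omega>
                   else r + (1 - 2 * r) * VD \<omega>)"
      have disj': "C \<inter> B = {}" using disj by auto
      have G1: "U1 \<in> borel_measurable M" "\<And>\<omega>. 0 < U1 \<omega> \<and> U1 \<omega> < 1"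
        "\<And>x. 0 \<le> x \<Longrightarrow> x \<le> 1 \<Longrightarrow> prob {\<omega> \<in> space M. U1 \<omega> \<le> x} = x"
        using glue_uniform[OF B(1) C(1) disj B(3) C(3) r(1) r(6) VB VC VD] unfolding U1_def by auto
      have G2: "U2 \<in> borel_measurable M" "\<And>\<omega>. 0 < U2 \<omega> \<and> U2 \<omega> < 1"
        "\<And>x. 0 \<le> x \<Longrightarrow> x \<le> 1 \<Longrightarrow> prob {\<omega> \<in> space M. U2 \<omega> \<le> x} = x"
        using glue_uniform[OF C(1) B(1) disj' C(3) B(3) r(1) r(6) VC VB VD'] unfolding U2_def by auto
      define q where "q = (\<lambda>u. Inf {y. u \<le> cdf (distr M borel X) y})"
      note L1 = quantile_law[OF Xmeas G1(1) G1(2) G1(3), folded q_def]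
      note L2 = quantile_law[OF Xmeas G2(1) G2(2) G2(3), folded q_def]
      define X1 where "X1 = (\<lambda>\<omega>. q (U1 \<omega>))"
      define X2 where "X2 = (\<lambda>\<omega>. q (U2 \<omega>))"
      have X1m[measurable]: "X1 \<in> borel_measurable M" and X2m[measurable]: "X2 \<in> borel_measurable M"
        using L1 L2 unfolding X1_def X2_def q_def by auto
      have sl1: "same_law M X1 X" using L1 X1m Xmeas unfolding same_law_def X1_def q_def by auto
      have sl2: "same_law M X2 X" using L2 X2m Xmeas unfolding same_law_def X2_def q_def by auto
      have sl12: "same_law M X1 X2" using L1 L2 X1m X2m unfolding same_law_def X1_def X2_def q_def by auto
      have X1M: "X1 \<in> \<M>" using assms(13) X(1) sl1 X1m unfolding law_invariant_set_def by blast
      have X2M: "X2 \<in> \<M>" using assms(13) X(1) sl2 X2m unfolding law_invariant_set_def by blast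
      have eqY: "integral\<^sup>L M (\<lambda>\<omega>. X1 \<omega> * Y \<omega>) = integral\<^sup>L M (\<lambda>\<omega>. X2 \<omega> * Y \<omega>)"
        using LI X1M X2M sl12 unfolding law_invariant_functional_def by blast
      have eqE: "integral\<^sup>L M X1 = integral\<^sup>L M X2" by (rule same_law_integral[OF sl12])
      define g where "g = (\<lambda>\<omega>. (X1 \<omega> - X2 \<omega>) * (Y \<omega> - t))"
      have gform: "g = (\<lambda>\<omega>. (X1 \<omega> * Y \<omega> - X2 \<omega> * Y \<omega>) - (t * X1 \<omega> - t * X2 \<omega>))"
        unfolding g_def by (auto simp: algebra_simps)
      have i1: "integrable M (\<lambda>\<omega>. X1 \<omega> * Y \<omega>)" "integrable M (\<lambda>\<omega>. X2 \<omega> * Y \<omega>)"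
        "integrable M X1" "integrable M X2" using Mprod X1M X2M Mint by auto
      have gint: "integrable M g" unfolding gform using i1 by auto
      have gint0: "integral\<^sup>L M g = 0" unfolding gform using i1 eqY eqE by simp
      have galois: "q u \<le> y0 \<longleftrightarrow> u \<le> FX y0" if "0 < u" "u < 1" for u
        using quantile_galois[OF Xmeas that] unfolding q_def FX_def by simp
      have VBb: "0 < VB \<omega> \<and> VB \<omega> < 1" "0 < VC \<omega> \<and> VC \<omega> < 1" for \<omega>
        using VB VC unfolding unif_on_def by auto
      have gpos: "0 \<le> g \<omega> \<and> (\<omega> \<in> C \<longrightarrow> 0 < g \<omega>)" if w: "\<omega> \<in> space M" for \<omega>
      proof -
        have u1: "0 < U1 \<omega>" "U1 \<omega> < 1" "0 < U2 \<omega>" "U2 \<omega> < 1" using G1(2) G2(2) by auto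
        show ?thesis
        proof (cases "\<omega> \<in> B")
          case True
          then have nC: "\<omega> \<notin> C" using disj by auto
          have e1: "U1 \<omega> = r * VB \<omega>" "U2 \<omega> = (1 - r) + r * VB \<omega>" using True nC by (auto simp: U1_def U2_def)
          have "r * VB \<omega> < r * 1" using VBb(1)[of \<omega>] r by (intro mult_strict_left_mono) auto
          then have "U1 \<omega> \<le> FX y0" using e1 r by linarith
          then have x1: "X1 \<omega> \<le> y0" using galois u1 unfolding X1_def by auto
          have "0 < r * VB \<omega>" using VBb(1)[of \<omega>] r by auto
          then have "\<not> U2 \<omega> \<le> FX y0" using e1 r by linarith
          then have x2: "y0 < X2 \<omega>" using galois u1 unfolding X2_def by force
          have "Y \<omega> \<le> t" using True B(2) unfolding Ylo_def by auto
          then have "0 \<le> g \<omega>" unfolding g_def using x1 x2 by (intro mult_nonpos_nonpos) auto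
          then show ?thesis using nC by auto
        next
          case nB: False
          show ?thesis
          proof (cases "\<omega> \<in> C")
            case True
            have e1: "U2 \<omega> = r * VC \<omega>" "U1 \<omega> = (1 - r) + r * VC \<omega>" using True nB by (auto simp: U1_def U2_def)
            have "r * VC \<omega> < r * 1" using VBb(2)[of \<omega>] r by (intro mult_strict_left_mono) auto
            then have "U2 \<omega> \<le> FX y0" using e1 r by linarith
            then have x2: "X2 \<omega> \<le> y0" using galois u1 unfolding X2_def by auto
            have "0 < r * VC \<omega>" using VBb(2)[of \<omega>] r by auto
            then have "\<not> U1 \<omega> \<le> FX y0" using e1 r by linarith
            then have x1: "y0 < X1 \<omega>" using galois u1 unfolding X1_def by force
            have "t < Y \<omega>" using True C(2) unfolding Yhi_def by auto
            then have "0 < g \<omega>" unfolding g_def using x1 x2 by (intro mult_pos_pos) auto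
            then show ?thesis by auto
          next
            case False
            then have "U1 \<omega> = U2 \<omega>" using nB by (auto simp: U1_def U2_def)
            then show ?thesis using False unfolding g_def X1_def X2_def by simp
          qed
        qed
      qed
      have "AE \<omega> in M. 0 \<le> g \<omega>" using gpos by (intro AE_I2) auto
      then have "AE \<omega> in M. g \<omega> = 0" using integral_nonneg_eq_0_iff_AE[OF gint] gint0 by simp
      then have "AE \<omega> in M. \<omega> \<notin> C"
        by (rule eventually_mono) (use gpos sets.sets_into_space[OF C(1)] in force)
      then have "C \<in> null_sets M" using AE_iff_null_sets[OF C(1)] by simp
      then have "prob C = 0" by (simp add: emeasure_eq_measure null_sets_def)
      then show False using C(3) r(1) by simp
    qed
  next
    assume "as_constant M Y"
    then obtain c where c: "AE \<omega> in M. Y \<omega> = c" unfolding as_constant_def by blast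
    show "law_invariant_functional M \<M> (\<lambda>X. integral\<^sup>L M (\<lambda>\<omega>. X \<omega> * Y \<omega>))"
      unfolding law_invariant_functional_def
    proof (intro ballI impI)
      fix X1 X2 assume X: "X1 \<in> \<M>" "X2 \<in> \<M>" "same_law M X1 X2"
      have m: "X1 \<in> borel_measurable M" "X2 \<in> borel_measurable M" using X Mmeas by auto
      have "integral\<^sup>L M (\<lambda>\<omega>. X1 \<omega> * Y \<omega>) = integral\<^sup>L M (\<lambda>\<omega>. c * X1 \<omega>)"
        using m c by (intro integral_cong_AE) auto
      also have "\<dots> = c * integral\<^sup>L M X1" by simp
      also have "\<dots> = c * integral\<^sup>L M X2" using same_law_integral[OF X(3)] by simp
      also have "\<dots> = integral\<^sup>L M (\<lambda>\<omega>. c * X2 \<omega>)" by simp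
      also have "\<dots> = integral\<^sup>L M (\<lambda>\<omega>. X2 \<omega> * Y \<omega>)"
        using m c by (intro integral_cong_AE) auto
      finally show "integral\<^sup>L M (\<lambda>\<omega>. X1 \<omega> * Y \<omega>) = integral\<^sup>L M (\<lambda>\<omega>. X2 \<omega> * Y \<omega>)" .
    qed
  qed
qed


end
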